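(* Let $\delta\ge 2$ and $s\in\{1,\dots,n\}$ with $r:=d_s-\delta+1\ge 1$, let $\tilde d=\sum_{i\ne s}(d_i-1)+d_s-\delta$, and let $d$ be an integer with $1\le d\le\tilde d$. If $d<r$ then $\dim_{\mathbb F_q}\mathcal D^{(\delta,s)}_{\mathcal X}(d)=\dim_{\mathbb F_q}\mathcal C_{\mathcal X}(d)$. If $r\le d\le\tilde d$ then $$\dim_{\mathbb F_q}\mathcal D^{(\delta,s)}_{\mathcal X}(d)=\dim_{\mathbb F_q}\mathcal C_{\mathcal X}(d)-\sum_{i=0}^{\delta-2}\dim_{\mathbb F_q}\mathcal C_{\mathcal X_s}(d-r-i),$$ where $\dim_{\mathbb F_q}\mathcal C_{\mathcal X_s}(e)$ is taken to be $0$ when $e<0$.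
   Context: Let $\mathbb F_q$ be a finite field, $K_1,\dots,K_n\subseteq\mathbb F_q$ nonempty, $d_i=|K_i|$, and $\mathcal X=K_1\times\cdots\times K_n=\{\boldsymbol\alpha_1,\dots,\boldsymbol\alpha_m\}$ (a fixed enumeration), $m=\prod_{i=1}^n d_i$. Let $\Psi:\mathbb F_q[X_1,\dots,X_n]\to\mathbb F_q^m$, $f\mapsto(f(\boldsymbol\alpha_1),\dots,f(\boldsymbol\alpha_m))$. For $d\ge 0$, $\mathbb F_q[X_1,\dots,X_n]_{\le d}$ is the space of polynomials of degree at most $d$ together with $0$. The affine cartesian code is $\mathcal C_{\mathcal X}(d)=\Psi(\mathbb F_q[X_1,\dots,X_n]_{\le d})$. For integers $\delta\ge 2$ and $s\in\{1,\dots,n\}$, $\mathcal P^{(\delta,s)}_d$ is the set of $f\in\mathbb F_q[X_1,\dots,X_n]_{\le d}$ with $\deg_{X_s}f<d_s-\delta+1$, together with $0$; the $(\delta,s)$-quasi affine cartesian code is $\mathcal D^{(\delta,s)}_{\mathcal X}(d)=\Psi(\mathcal P^{(\delta,s)}_d)$. Also $\mathcal X_s=K_1\times\cdots\times K_{s-1}\times K_{s+1}\times\cdots\times K_n\subseteq\mathbb F_q^{n-1}$, and $\mathcal C_{\mathcal X_s}(e)$ is the affine cartesian code of order $e$ defined in the same way over the sets $K_1,\dots,K_{s-1},K_{s+1},\dots,K_n$ (image of polynomials of degree $\le e$ in $n-1$ variables evaluated at the points of $\mathcal X_s$). *)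

theory Defs
  imports Complex_Main "HOL-Library.Function_Algebras"
begin

text \<open>Multivariate polynomials in the variables X_0,...,X_(n-1) (0-based indices)
  are represented by their coefficient functions: c :: (nat => nat) => 'a maps an
  exponent vector to its coefficient; c must have finite support and only involve
  the first n variables.\<close>

definition mpolys :: "nat \<Rightarrow> ((nat \<Rightarrow> nat) \<Rightarrow> 'a::zero) set" where
  "mpolys n = {c. finite {e. c e \<noteq> 0} \<and> (\<forall>e. c e \<noteq> 0 \<longrightarrow> (\<forall>i\<ge>n. e i = 0))}"

definition polys_le :: "nat \<Rightarrow> nat \<Rightarrow> ((nat \<Rightarrow> nat) \<Rightarrow> 'a::zero) set" where
  "polys_le n d = {c \<in> mpolys n. \<forall>e. c e \<noteq> 0 \<longrightarrow> (\<Sum>i<n. e i) \<le> d}"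

definition mpeval :: "nat \<Rightarrow> ((nat \<Rightarrow> nat) \<Rightarrow> 'a::comm_ring_1) \<Rightarrow> (nat \<Rightarrow> 'a) \<Rightarrow> 'a" where
  "mpeval n c x = (\<Sum>e\<in>{e. c e \<noteq> 0}. c e * (\<Prod>i<n. x i ^ e i))"

definition grid :: "nat \<Rightarrow> (nat \<Rightarrow> 'a set) \<Rightarrow> (nat \<Rightarrow> 'a) set" where
  "grid n K = {x. (\<forall>i<n. x i \<in> K i) \<and> (\<forall>i\<ge>n. x i = undefined)}"

text \<open>Evaluation map Psi: words are functions on the grid (coordinates indexed
  by the grid points, zero outside), i.e. vectors of F_q^m.\<close>
definition Psi :: "nat \<Rightarrow> (nat \<Rightarrow> 'a set) \<Rightarrow> ((nat \<Rightarrow> nat) \<Rightarrow> 'a::comm_ring_1)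
    \<Rightarrow> ((nat \<Rightarrow> 'a) \<Rightarrow> 'a)" where
  "Psi n K c = (\<lambda>x. if x \<in> grid n K then mpeval n c x else 0)"

definition aff_code :: "nat \<Rightarrow> (nat \<Rightarrow> 'a set) \<Rightarrow> nat \<Rightarrow> ((nat \<Rightarrow> 'a) \<Rightarrow> 'a::comm_ring_1) set" where
  "aff_code n K d = Psi n K ` polys_le n d"

definition quasi_polys :: "nat \<Rightarrow> (nat \<Rightarrow> 'a set) \<Rightarrow> nat \<Rightarrow> nat \<Rightarrow> nat
    \<Rightarrow> ((nat \<Rightarrow> nat) \<Rightarrow> 'a::zero) set" where
  "quasi_polys n K \<delta> s d =
     {c \<in> polys_le n d. \<forall>e. c e \<noteq> 0 \<longrightarrow> int (e s) < int (card (K s)) - int \<delta> + 1}"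

definition quasi_code :: "nat \<Rightarrow> (nat \<Rightarrow> 'a set) \<Rightarrow> nat \<Rightarrow> nat \<Rightarrow> nat
    \<Rightarrow> ((nat \<Rightarrow> 'a) \<Rightarrow> 'a::comm_ring_1) set" where
  "quasi_code n K \<delta> s d = Psi n K ` quasi_polys n K \<delta> s d"

text \<open>The sets K_i with K_s removed (re-indexed), giving X_s in n-1 variables.\<close>
definition drop_set :: "(nat \<Rightarrow> 'a set) \<Rightarrow> nat \<Rightarrow> nat \<Rightarrow> 'a set" where
  "drop_set K s = (\<lambda>i. if i < s then K i else K (Suc i))"

definition code_dim :: "((nat \<Rightarrow> 'a) \<Rightarrow> 'a::field) set \<Rightarrow> nat" where
  "code_dim C = vector_space.dim (\<lambda>a f. (\<lambda>x. a * f x)) C"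

definition dim_Xs :: "nat \<Rightarrow> (nat \<Rightarrow> 'a::field set) \<Rightarrow> nat \<Rightarrow> int \<Rightarrow> int" where
  "dim_Xs n K s e = (if e < 0 then 0
      else int (code_dim (aff_code (n - 1) (drop_set K s) (nat e) :: ((nat \<Rightarrow> 'a) \<Rightarrow> 'a) set)))"

end

theory Submission
  imports Defs "HOL-Computational_Algebra.Polynomial"
begin


lemma coeff_sum_monom_lt: "coeff (\<Sum>k<N. monom ((b::nat\<Rightarrow>'a::field) k) k) i = (if i < N then b i else 0)"
  unfolding coeff_sum coeff_monom by (simp add: sum.delta)

lemma vanish_coeffs:
  fixes b :: "nat \<Rightarrow> 'a::field"
  assumes "finite K" "N \<le> card K" "\<And>t. t \<in> K \<Longrightarrow> (\<Sum>k<N. b k * t ^ k) = 0"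
  shows "\<forall>k<N. b k = 0"
proof (cases "N = 0")
  case True then show ?thesis by simp
next
  case False
  define p where "p = (\<Sum>k<N. monom (b k) k)"
  have cp: "coeff p i = (if i < N then b i else 0)" for i
    unfolding p_def by (rule coeff_sum_monom_lt)
  have dp: "degree p < N"
    using False by (intro le_less_trans[OF degree_le[of "N - 1"]]) (auto simp: cp)
  have pp: "poly p t = (\<Sum>k<N. b k * t ^ k)" for t
    unfolding p_def poly_sum by (simp add: poly_monom)
  have "p = 0"
    by (rule poly_eqI_degree[of K]) (use assms dp in \<open>auto simp: pp\<close>)
  then show ?thesis using cp by (metis coeff_0)
qed

lemma power_card_reduce:
  fixes K :: "'a::field set"
  assumes "finite K"
  shows "\<exists>a. \<forall>x\<in>K. x ^ card K = (\<Sum>j<card K. a j * x ^ j)"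
proof -
  define p where "p = (\<Prod>y\<in>K. [:-y, 1:])"
  define q where "q = monom 1 (card K) - p"
  have dp: "degree p = card K"
    unfolding p_def by (subst degree_prod_sum_eq) auto
  have lp: "lead_coeff p = 1"
    unfolding p_def lead_coeff_prod by simp
  have cq: "coeff q i = 0" if "i \<ge> card K" for i
  proof (cases "i = card K")
    case True then show ?thesis using lp dp by (simp add: q_def)
  next
    case False
    then have "i > degree p" using that dp by simp
    then show ?thesis using False by (simp add: q_def coeff_eq_0)
  qed
  have dq: "degree q < card K \<or> q = 0"
  proof (cases "q = 0")
    case False
    have "degree q \<le> card K" using cq by (intro degree_le) auto
    moreover have "degree q \<noteq> card K" using cq[of "card K"] False
      by (metis leading_coeff_0_iff order_refl)
    ultimately show ?thesis by simp
  qed simp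
  have "\<forall>x\<in>K. x ^ card K = (\<Sum>j<card K. coeff q j * x ^ j)"
  proof
    fix x assume x: "x \<in> K"
    have "poly p x = 0" unfolding p_def poly_prod using x assms
      by (intro prod_zero) auto
    then have "x ^ card K = poly q x" by (simp add: q_def poly_monom)
    also have "\<dots> = (\<Sum>j<card K. coeff q j * x ^ j)"
    proof (cases "q = 0")
      case True then show ?thesis by simp
    next
      case False
      then have "degree q < card K" using dq by simp
      then show ?thesis unfolding poly_altdef
        by (intro sum.mono_neutral_left) (auto simp: coeff_eq_0)
    qed
    finally show "x ^ card K = (\<Sum>j<card K. coeff q j * x ^ j)" .
  qed
  then show ?thesis by blast
qed



definition boxm :: "nat \<Rightarrow> (nat \<Rightarrow> 'a set) \<Rightarrow> (nat \<Rightarrow> nat) set" where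
  "boxm m K = {e. (\<forall>i<m. e i < card (K i)) \<and> (\<forall>i\<ge>m. e i = 0)}"

lemma finite_bounded_funs: "finite {e::nat\<Rightarrow>nat. (\<forall>i<m. e i < N) \<and> (\<forall>i\<ge>m. e i = 0)}"
proof -
  have "{e::nat\<Rightarrow>nat. (\<forall>i<m. e i < N) \<and> (\<forall>i\<ge>m. e i = 0)} \<subseteq>
     {f. \<forall>x. (x \<in> {..<m} \<longrightarrow> f x \<in> {..<N}) \<and> (x \<notin> {..<m} \<longrightarrow> f x = 0)}"
    by auto
  then show ?thesis by (rule finite_subset) (intro finite_set_of_finite_funs; simp)
qed

lemma finite_boxm: "finite (boxm m K)"
proof -
  have "boxm m K \<subseteq> {e. (\<forall>i<m. e i < (\<Sum>j<m. card (K j))) \<and> (\<forall>i\<ge>m. e i = 0)}"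
    unfolding boxm_def
  proof (clarsimp)
    fix e i assume "\<forall>i<m. e i < card (K i)" "i < m"
    then have "e i < card (K i)" by simp
    also have "card (K i) \<le> (\<Sum>j<m. card (K j))" using \<open>i < m\<close> by (intro member_le_sum) auto
    finally show "e i < (\<Sum>j<m. card (K j))" .
  qed
  then show ?thesis by (rule finite_subset[OF _ finite_bounded_funs])
qed

lemma boxm_Suc: "boxm (Suc m) K = (\<lambda>(e',k). e'(m:=k)) ` (boxm m K \<times> {..<card (K m)})"
proof (rule set_eqI, rule iffI)
  fix e assume e: "e \<in> boxm (Suc m) K"
  then have "e = (\<lambda>(e',k). e'(m:=k)) (e(m:=0), e m)" by simp
  moreover have "(e(m:=0), e m) \<in> boxm m K \<times> {..<card (K m)}"
    using e by (auto simp: boxm_def)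
  ultimately show "e \<in> (\<lambda>(e',k). e'(m:=k)) ` (boxm m K \<times> {..<card (K m)})" by blast
next
  fix e assume "e \<in> (\<lambda>(e',k). e'(m:=k)) ` (boxm m K \<times> {..<card (K m)})"
  then show "e \<in> boxm (Suc m) K" by (auto simp: boxm_def less_Suc_eq)
qed

lemma inj_boxm_Suc: "inj_on (\<lambda>(e',k). e'(m:=k)) (boxm m K \<times> {..<card (K m)})"
proof (rule inj_onI, clarsimp)
  fix a b a' b' assume "a \<in> boxm m K" "a' \<in> boxm m K" "a(m := b) = a'(m := b')"
  note eq = this(3)
  have "b = b'" using fun_cong[OF eq, of m] by simp
  moreover have "a i = a' i" for i
  proof (cases "i = m")
    case True then show ?thesis using \<open>a \<in> boxm m K\<close> \<open>a' \<in> boxm m K\<close> by (simp add: boxm_def)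
  next
    case False then show ?thesis using fun_cong[OF eq, of i] by simp
  qed
  ultimately show "a = a' \<and> b = b'" by auto
qed

lemma indep_core:
  fixes K :: "nat \<Rightarrow> 'a::field set"
  assumes fin: "\<And>i. finite (K i)"
  shows "(\<forall>e. c e \<noteq> 0 \<longrightarrow> e \<in> boxm m K) \<Longrightarrow>
    (\<forall>x. (\<forall>i<m. x i \<in> K i) \<longrightarrow> (\<Sum>e\<in>boxm m K. c e * (\<Prod>i<m. x i ^ e i)) = 0) \<Longrightarrow> c = 0"
proof (induction m arbitrary: c)
  case 0
  have b0: "boxm 0 K = {0}" by (auto simp: boxm_def fun_eq_iff)
  from 0(2) have "c 0 = 0" by (simp add: b0 zero_fun_def)
  then show ?case using 0(1) unfolding b0 by (metis ext singletonD zero_fun_def)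
next
  case (Suc m)
  define B where "B y k = (\<Sum>e'\<in>boxm m K. c (e'(m:=k)) * (\<Prod>i<m. y i ^ e' i))" for y k
  have expand: "(\<Sum>e\<in>boxm (Suc m) K. c e * (\<Prod>i<Suc m. x i ^ e i)) =
      (\<Sum>k<card (K m). B x k * x m ^ k)" for x
  proof -
    have "(\<Sum>e\<in>boxm (Suc m) K. c e * (\<Prod>i<Suc m. x i ^ e i)) =
       (\<Sum>p\<in>boxm m K \<times> {..<card (K m)}. c ((fst p)(m:=snd p)) * ((\<Prod>i<m. x i ^ fst p i) * x m ^ snd p))"
      unfolding boxm_Suc by (subst sum.reindex[OF inj_boxm_Suc]) (auto simp: case_prod_beta lessThan_Suc intro!: sum.cong prod.cong)
    also have "\<dots> = (\<Sum>e'\<in>boxm m K. \<Sum>k<card (K m). c (e'(m:=k)) * ((\<Prod>i<m. x i ^ e' i) * x m ^ k))"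
      unfolding sum.cartesian_product by (simp add: case_prod_beta)
    also have "\<dots> = (\<Sum>k<card (K m). \<Sum>e'\<in>boxm m K. c (e'(m:=k)) * ((\<Prod>i<m. x i ^ e' i) * x m ^ k))"
      by (rule sum.swap)
    also have "\<dots> = (\<Sum>k<card (K m). B x k * x m ^ k)"
      unfolding B_def by (simp add: sum_distrib_right mult.assoc)
    finally show ?thesis .
  qed
  have Bz: "B y k = 0" if y: "\<forall>i<m. y i \<in> K i" and k: "k < card (K m)" for y k
  proof -
    have "\<forall>k<card (K m). B y k = 0"
    proof (rule vanish_coeffs[OF fin order_refl])
      fix t assume t: "t \<in> K m"
      have "\<forall>i<Suc m. (y(m:=t)) i \<in> K i" using y t by (auto simp: less_Suc_eq)
      then have "(\<Sum>e\<in>boxm (Suc m) K. c e * (\<Prod>i<Suc m. (y(m:=t)) i ^ e i)) = 0"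
        using Suc(3) by blast
      then have "(\<Sum>k<card (K m). B (y(m:=t)) k * (y(m:=t)) m ^ k) = 0"
        using expand[of "y(m:=t)"] by simp
      moreover have "B (y(m:=t)) k = B y k" for k unfolding B_def by simp
      ultimately show "(\<Sum>k<card (K m). B y k * t ^ k) = 0" by simp
    qed
    then show ?thesis using k by simp
  qed
  have ck: "(\<lambda>e'. if e' m = 0 then c (e'(m:=k)) else 0) = 0" if k: "k < card (K m)" for k
  proof (rule Suc.IH)
    show "\<forall>e. (if e m = 0 then c (e(m := k)) else 0) \<noteq> 0 \<longrightarrow> e \<in> boxm m K"
    proof (intro allI impI)
      fix e assume h: "(if e m = 0 then c (e(m := k)) else 0) \<noteq> 0"
      then have "e m = 0" "c (e(m:=k)) \<noteq> 0" by (auto split: if_splits)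
      then have "e(m:=k) \<in> boxm (Suc m) K" using Suc(2) by blast
      then have h1: "\<forall>i<Suc m. (e(m:=k)) i < card (K i)" and h2: "\<forall>i\<ge>Suc m. (e(m:=k)) i = 0"
        unfolding boxm_def by auto
      have "\<forall>i<m. e i < card (K i)"
      proof (intro allI impI)
        fix i assume "i < m" then show "e i < card (K i)" using h1[rule_format, of i] by simp
      qed
      moreover have "\<forall>i\<ge>m. e i = 0"
      proof (intro allI impI)
        fix i assume "m \<le> i" then show "e i = 0" using h2[rule_format, of i] \<open>e m = 0\<close>
          by (cases "i = m") auto
      qed
      ultimately show "e \<in> boxm m K" unfolding boxm_def by blast
    qed
    show "\<forall>x. (\<forall>i<m. x i \<in> K i) \<longrightarrow>
        (\<Sum>e\<in>boxm m K. (if e m = 0 then c (e(m := k)) else 0) * (\<Prod>i<m. x i ^ e i)) = 0"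
    proof (intro allI impI)
      fix x assume x: "\<forall>i<m. x i \<in> K i"
      have "(\<Sum>e\<in>boxm m K. (if e m = 0 then c (e(m := k)) else 0) * (\<Prod>i<m. x i ^ e i)) = B x k"
        unfolding B_def by (intro sum.cong) (auto simp: boxm_def)
      then show "(\<Sum>e\<in>boxm m K. (if e m = 0 then c (e(m := k)) else 0) * (\<Prod>i<m. x i ^ e i)) = 0"
        using Bz[OF x k] by simp
    qed
  qed
  have "c e = 0" for e
  proof (rule ccontr)
    assume ne: "c e \<noteq> 0"
    then have eb: "e \<in> boxm (Suc m) K" using Suc(2) by blast
    then have k: "e m < card (K m)" by (simp add: boxm_def)
    have "(\<lambda>e'. if e' m = 0 then c (e'(m:=e m)) else 0) (e(m:=0)) = c e" by simp
    then show False using fun_cong[OF ck[OF k], of "e(m:=0)"] ne by simp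
  qed
  then show "c = 0" by (simp add: fun_eq_iff)
qed



interpretation FV: vector_space "(\<lambda>a f x. a * f x) :: 'a::field \<Rightarrow> ((nat \<Rightarrow> 'a) \<Rightarrow> 'a) \<Rightarrow> ((nat \<Rightarrow> 'a) \<Rightarrow> 'a)"
  by unfold_locales (auto simp: algebra_simps fun_eq_iff)

lemma code_dim_FV: "code_dim C = FV.dim C"
  by (simp add: code_dim_def)

lemma sum_fun_apply: "(\<Sum>a\<in>A. f a) x = (\<Sum>a\<in>A. f a x)"
  by (induction A rule: infinite_finite_induct) auto

definition gm :: "nat \<Rightarrow> (nat \<Rightarrow> 'a set) \<Rightarrow> (nat \<Rightarrow> nat) \<Rightarrow> (nat \<Rightarrow> 'a) \<Rightarrow> 'a::field" where
  "gm n K e = (\<lambda>x. if x \<in> grid n K then (\<Prod>i<n. x i ^ e i) else 0)"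

lemma Psi_sum:
  assumes "finite A" "\<forall>e. c e \<noteq> 0 \<longrightarrow> e \<in> A"
  shows "Psi n K c = (\<Sum>e\<in>A. (\<lambda>x. c e * gm n K e x))"
proof (rule ext)
  fix x
  have "mpeval n c x = (\<Sum>e\<in>A. c e * (\<Prod>i<n. x i ^ e i))"
    unfolding mpeval_def using assms by (intro sum.mono_neutral_left) auto
  then show "Psi n K c x = (\<Sum>e\<in>A. (\<lambda>x. c e * gm n K e x)) x"
    unfolding sum_fun_apply Psi_def gm_def by auto
qed

lemma coeffs_zero:
  fixes K :: "nat \<Rightarrow> 'a::field set"
  assumes fin: "\<And>i. finite (K i)" and supp: "\<forall>e. c e \<noteq> 0 \<longrightarrow> e \<in> boxm n K"
    and z: "(\<Sum>e\<in>boxm n K. (\<lambda>x. c e * gm n K e x)) = 0"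
  shows "c = 0"
proof (rule indep_core[OF fin supp], intro allI impI)
  fix x :: "nat \<Rightarrow> 'a" assume x: "\<forall>i<n. x i \<in> K i"
  define x' where "x' = (\<lambda>i. if i < n then x i else undefined)"
  have xg: "x' \<in> grid n K" using x by (auto simp: grid_def x'_def)
  have "(\<Sum>e\<in>boxm n K. c e * gm n K e x') = 0"
    using fun_cong[OF z, of x'] unfolding sum_fun_apply by simp
  moreover have "gm n K e x' = (\<Prod>i<n. x i ^ e i)" for e
    using xg by (simp add: gm_def x'_def)
  ultimately show "(\<Sum>e\<in>boxm n K. c e * (\<Prod>i<n. x i ^ e i)) = 0" by simp
qed



lemma gm_inj:
  fixes K :: "nat \<Rightarrow> 'a::field set"
  assumes fin: "\<And>i. finite (K i)"
  shows "inj_on (gm n K :: _ \<Rightarrow> _ \<Rightarrow> 'a) (boxm n K)"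
proof (rule inj_onI, rule ccontr)
  fix e1 e2 assume e: "e1 \<in> boxm n K" "e2 \<in> boxm n K" "gm n K e1 = (gm n K e2 :: _ \<Rightarrow> 'a)" "e1 \<noteq> e2"
  define c :: "(nat \<Rightarrow> nat) \<Rightarrow> 'a" where "c = (\<lambda>e. if e = e1 then 1 else if e = e2 then -1 else 0)"
  have supp: "\<forall>e. c e \<noteq> 0 \<longrightarrow> e \<in> boxm n K" using e by (auto simp: c_def)
  have "(\<Sum>e\<in>boxm n K. (\<lambda>x. c e * gm n K e x)) = 0"
  proof (rule ext)
    fix x
    have "(\<Sum>e\<in>boxm n K. c e * gm n K e x) = (\<Sum>e\<in>{e1,e2}. c e * gm n K e x)"
      using e(1,2) finite_boxm by (intro sum.mono_neutral_right) (auto simp: c_def)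
    also have "\<dots> = gm n K e1 x - gm n K e2 x" using e(4) by (simp add: c_def)
    also have "\<dots> = 0" using e(3) by simp
    finally show "(\<Sum>e\<in>boxm n K. (\<lambda>x. c e * gm n K e x)) x = 0 x" by (simp add: sum_fun_apply)
  qed
  then have "c = 0" by (rule coeffs_zero[OF fin supp])
  then have "c e1 = 0" by simp
  then show False by (simp add: c_def)
qed

lemma gm_indep:
  fixes K :: "nat \<Rightarrow> 'a::field set"
  assumes fin: "\<And>i. finite (K i)" and B: "B \<subseteq> boxm n K"
  shows "FV.independent (gm n K ` B :: ((nat \<Rightarrow> 'a) \<Rightarrow> 'a) set)"
proof
  have finB: "finite B" by (rule finite_subset[OF B finite_boxm])
  have inj: "inj_on (gm n K :: _ \<Rightarrow> _ \<Rightarrow> 'a) B" by (rule inj_on_subset[OF gm_inj[OF fin] B])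
  assume dep: "FV.dependent (gm n K ` B :: ((nat \<Rightarrow> 'a) \<Rightarrow> 'a) set)"
  have "\<exists>u. (\<exists>v\<in>gm n K ` B. u v \<noteq> 0) \<and>
      (\<Sum>v\<in>gm n K ` B. (\<lambda>x. u v * v x)) = (0 :: (nat \<Rightarrow> 'a) \<Rightarrow> 'a)"
    using iffD1[OF FV.dependent_finite[OF finite_imageI[OF finB]] dep] by simp
  then obtain u where u: "\<exists>v\<in>gm n K ` B. u v \<noteq> 0"
      "(\<Sum>v\<in>gm n K ` B. (\<lambda>x. u v * v x)) = (0 :: (nat \<Rightarrow> 'a) \<Rightarrow> 'a)"
    by (elim exE conjE) (rule that)
  define c where "c = (\<lambda>e. if e \<in> B then u (gm n K e) else 0)"
  have supp: "\<forall>e. c e \<noteq> 0 \<longrightarrow> e \<in> boxm n K" using B unfolding c_def by auto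
  have "(\<Sum>e\<in>boxm n K. (\<lambda>x. c e * gm n K e x)) = (\<Sum>e\<in>B. (\<lambda>x. c e * gm n K e x))"
  proof (rule sum.mono_neutral_right[OF finite_boxm B])
    show "\<forall>e\<in>boxm n K - B. (\<lambda>x. c e * gm n K e x) = 0"
      by (simp add: c_def zero_fun_def)
  qed
  also have "\<dots> = (\<Sum>v\<in>gm n K ` B. (\<lambda>x. u v * v x))"
    by (subst sum.reindex[OF inj]) (simp add: c_def cong: sum.cong)
  also have "\<dots> = 0" by (rule u(2))
  finally have "c = 0" by (rule coeffs_zero[OF fin supp])
  obtain v where v: "v \<in> gm n K ` B" "u v \<noteq> 0" using u(1) by blast
  then obtain e where "e \<in> B" "v = gm n K e" by blast
  then have "c e = u v" by (simp add: c_def)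
  with \<open>c = 0\<close> v(2) show False by simp
qed



lemma sum_upd_less:
  fixes e :: "nat \<Rightarrow> nat"
  assumes "i < n" "k < e i"
  shows "(\<Sum>l<n. (e(i:=k)) l) < (\<Sum>l<n. e l)"
proof -
  have "(\<Sum>l<n. (e(i:=k)) l) = k + (\<Sum>l\<in>{..<n}-{i}. (e(i:=k)) l)"
    using assms by (subst sum.remove[of _ i]) auto
  also have "(\<Sum>l\<in>{..<n}-{i}. (e(i:=k)) l) = (\<Sum>l\<in>{..<n}-{i}. e l)"
    by (intro sum.cong) auto
  also have "k + (\<Sum>l\<in>{..<n}-{i}. e l) < e i + (\<Sum>l\<in>{..<n}-{i}. e l)" using assms by simp
  also have "\<dots> = (\<Sum>l<n. e l)"
    using assms by (subst sum.remove[of _ i, symmetric]) auto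
  finally show ?thesis .
qed

lemma prod_upd_split:
  fixes x :: "nat \<Rightarrow> 'a::comm_ring_1"
  assumes "i < n"
  shows "(\<Prod>l<n. x l ^ (e(i:=k)) l) = x i ^ k * (\<Prod>l\<in>{..<n}-{i}. x l ^ e l)"
proof -
  have "(\<Prod>l<n. x l ^ (e(i:=k)) l) = x i ^ k * (\<Prod>l\<in>{..<n}-{i}. x l ^ (e(i:=k)) l)"
    using assms by (subst prod.remove[of _ i]) auto
  also have "(\<Prod>l\<in>{..<n}-{i}. x l ^ (e(i:=k)) l) = (\<Prod>l\<in>{..<n}-{i}. x l ^ e l)"
    by (intro prod.cong) auto
  finally show ?thesis .
qed

lemma reduce:
  fixes K :: "nat \<Rightarrow> 'a::field set"
  assumes fin: "\<And>i. finite (K i)" and A0: "\<And>e. e \<in> A \<Longrightarrow> \<forall>i\<ge>n. e i = 0"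
    and closed: "\<And>e i k. e \<in> A \<Longrightarrow> i < n \<Longrightarrow> card (K i) \<le> e i \<Longrightarrow> k < e i \<Longrightarrow> e(i:=k) \<in> A"
  shows "e \<in> A \<Longrightarrow> (gm n K e :: _ \<Rightarrow> 'a) \<in> FV.span (gm n K ` (boxm n K \<inter> A))"
proof (induction "\<Sum>l<n. e l" arbitrary: e rule: less_induct)
  case less
  show ?case
  proof (cases "e \<in> boxm n K")
    case True
    then show ?thesis using less.prems by (intro FV.span_base) auto
  next
    case False
    then obtain i where i: "i < n" "card (K i) \<le> e i"
      using A0[OF less.prems] by (auto simp: boxm_def not_less)
    define N where "N = card (K i)"
    obtain a where a: "\<forall>x\<in>K i. x ^ N = (\<Sum>j<N. a j * x ^ j)"
      using power_card_reduce[OF fin] unfolding N_def by blast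
    define e' where "e' j = e(i := e i - N + j)" for j
    have eq: "gm n K e = (\<Sum>j<N. (\<lambda>x. a j * gm n K (e' j) x))"
    proof (rule ext)
      fix x :: "nat \<Rightarrow> 'a"
      show "gm n K e x = (\<Sum>j<N. (\<lambda>x. a j * gm n K (e' j) x)) x"
      proof (cases "x \<in> grid n K")
        case False then show ?thesis by (simp add: sum_fun_apply gm_def)
      next
        case True
        then have xi: "x i \<in> K i" using i by (simp add: grid_def)
        define P where "P = (\<Prod>l\<in>{..<n}-{i}. x l ^ e l)"
        have "(\<Prod>l<n. x l ^ e l) = x i ^ e i * P"
          using prod_upd_split[OF i(1), of x e "e i"] by (simp add: P_def)
        also have "x i ^ e i = x i ^ (e i - N) * x i ^ N"
          using i N_def by (simp add: power_add[symmetric])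
        also have "\<dots> = (\<Sum>j<N. a j * x i ^ (e i - N + j))"
          using a xi by (simp add: sum_distrib_left power_add algebra_simps)
        finally have "(\<Prod>l<n. x l ^ e l) = (\<Sum>j<N. a j * (x i ^ (e i - N + j) * P))"
          by (simp add: sum_distrib_left sum_distrib_right algebra_simps)
        moreover have "(\<Prod>l<n. x l ^ e' j l) = x i ^ (e i - N + j) * P" for j
          unfolding e'_def P_def by (rule prod_upd_split[OF i(1)])
        ultimately show ?thesis using True by (simp add: sum_fun_apply gm_def)
      qed
    qed
    have "gm n K (e' j) \<in> FV.span (gm n K ` (boxm n K \<inter> A))" if j: "j < N" for j
    proof (rule less.hyps)
      have "e i - N + j < e i" using i j N_def by simp
      then show "(\<Sum>l<n. e' j l) < (\<Sum>l<n. e l)" unfolding e'_def by (rule sum_upd_less[OF i(1)])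
      show "e' j \<in> A" unfolding e'_def using closed[OF less.prems i] \<open>e i - N + j < e i\<close> N_def by blast
    qed
    then show ?thesis unfolding eq by (intro FV.span_sum FV.span_scale) auto
  qed
qed



lemma Psi_pt:
  assumes "finite A" "\<forall>e. c e \<noteq> 0 \<longrightarrow> e \<in> A"
  shows "Psi n K c x = (\<Sum>e\<in>A. c e * gm n K e x)"
  using Psi_sum[OF assms, of n K] by (simp add: sum_fun_apply)

lemma dim_code:
  fixes K :: "nat \<Rightarrow> 'a::field set"
  assumes fin: "\<And>i. finite (K i)" and finA: "finite A" and A0: "\<And>e. e \<in> A \<Longrightarrow> \<forall>i\<ge>n. e i = 0"
    and closed: "\<And>e i k. e \<in> A \<Longrightarrow> i < n \<Longrightarrow> card (K i) \<le> e i \<Longrightarrow> k < e i \<Longrightarrow> e(i:=k) \<in> A"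
  shows "code_dim (Psi n K ` {c. \<forall>e. c e \<noteq> 0 \<longrightarrow> e \<in> A} :: ((nat \<Rightarrow> 'a) \<Rightarrow> 'a) set) = card (boxm n K \<inter> A)"
proof -
  define P :: "((nat \<Rightarrow> nat) \<Rightarrow> 'a) set" where "P = {c. \<forall>e. c e \<noteq> 0 \<longrightarrow> e \<in> A}"
  have 1: "Psi n K ` P = FV.span (gm n K ` A)"
  proof
    show "Psi n K ` P \<subseteq> FV.span (gm n K ` A)"
    proof
      fix v assume "v \<in> Psi n K ` P"
      then obtain c where c: "c \<in> P" "v = Psi n K c" by blast
      then have "v = (\<Sum>e\<in>A. (\<lambda>x. c e * gm n K e x))"
        using Psi_sum[OF finA] by (simp add: P_def)
      then show "v \<in> FV.span (gm n K ` A)"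
        by (simp only:) (intro FV.span_sum FV.span_scale FV.span_base imageI)
    qed
    show "FV.span (gm n K ` A) \<subseteq> Psi n K ` P"
    proof (rule FV.span_minimal)
      show "gm n K ` A \<subseteq> Psi n K ` P"
      proof
        fix v assume "v \<in> gm n K ` A"
        then obtain e where e: "e \<in> A" "v = gm n K e" by blast
        define m :: "(nat \<Rightarrow> nat) \<Rightarrow> 'a" where "m = (\<lambda>e'. if e' = e then 1 else 0)"
        have "m \<in> P" using e by (simp add: P_def m_def)
        moreover have "Psi n K m = gm n K e"
        proof (rule ext)
          fix x
          have "Psi n K m x = (\<Sum>e'\<in>{e}. m e' * gm n K e' x)"
            by (rule Psi_pt) (auto simp: m_def)
          then show "Psi n K m x = gm n K e x" by (simp add: m_def)
        qed
        ultimately show "v \<in> Psi n K ` P" unfolding e(2) by (metis image_eqI)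
      qed
      show "FV.subspace (Psi n K ` P)"
      proof (rule FV.subspaceI)
        have "Psi n K 0 = 0"
          by (rule ext) (simp add: Psi_pt[of "{}"])
        moreover have "0 \<in> P" by (simp add: P_def)
        ultimately show "0 \<in> Psi n K ` P" by (metis image_eqI)
      next
        fix v w assume "v \<in> Psi n K ` P" "w \<in> Psi n K ` P"
        then obtain c1 c2 where c: "c1 \<in> P" "c2 \<in> P" "v = Psi n K c1" "w = Psi n K c2" by blast
        have s: "c1 + c2 \<in> P" using c unfolding P_def by (auto simp: P_def) (metis add.left_neutral)
        have "v + w = Psi n K (c1 + c2)"
        proof (rule ext)
          fix x
          show "(v + w) x = Psi n K (c1 + c2) x"
            using c s finA unfolding P_def
            by (simp add: Psi_pt[OF finA] sum.distrib algebra_simps)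
        qed
        then show "v + w \<in> Psi n K ` P" using s by blast
      next
        fix a v assume "v \<in> Psi n K ` P"
        then obtain c1 where c: "c1 \<in> P" "v = Psi n K c1" by blast
        have s: "(\<lambda>e. a * c1 e) \<in> P" using c by (auto simp: P_def)
        have "(\<lambda>x. a * v x) = Psi n K (\<lambda>e. a * c1 e)"
        proof (rule ext)
          fix x
          show "a * v x = Psi n K (\<lambda>e. a * c1 e) x"
            using c s finA unfolding P_def
            by (simp add: Psi_pt[OF finA] sum_distrib_left algebra_simps)
        qed
        then show "(\<lambda>x. a * v x) \<in> Psi n K ` P" using s by blast
      qed
    qed
  qed
  have 2: "FV.span (gm n K ` A) = FV.span (gm n K ` (boxm n K \<inter> A))"
  proof
    show "FV.span (gm n K ` A) \<subseteq> FV.span (gm n K ` (boxm n K \<inter> A))"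
      by (rule FV.span_minimal) (use reduce[OF fin A0 closed] in \<open>auto simp: FV.subspace_span\<close>)
    show "FV.span (gm n K ` (boxm n K \<inter> A)) \<subseteq> FV.span (gm n K ` A)"
      by (intro FV.span_mono image_mono) auto
  qed
  have 3: "FV.independent (gm n K ` (boxm n K \<inter> A) :: ((nat \<Rightarrow> 'a) \<Rightarrow> 'a) set)"
    by (rule gm_indep[OF fin]) auto
  have 4: "card (gm n K ` (boxm n K \<inter> A) :: ((nat \<Rightarrow> 'a) \<Rightarrow> 'a) set) = card (boxm n K \<inter> A)"
    by (rule card_image, rule inj_on_subset[OF gm_inj[OF fin]]) auto
  show ?thesis
    unfolding code_dim_FV P_def[symmetric] 1 2 FV.dim_span_eq_card_independent[OF 3] 4 ..
qed



definition Ad :: "nat \<Rightarrow> nat \<Rightarrow> (nat \<Rightarrow> nat) set" where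
  "Ad n d = {e. (\<forall>i\<ge>n. e i = 0) \<and> (\<Sum>i<n. e i) \<le> d}"

lemma finite_Ad: "finite (Ad n d)"
proof -
  have "Ad n d \<subseteq> {e. (\<forall>i<n. e i < Suc d) \<and> (\<forall>i\<ge>n. e i = 0)}"
  proof (clarsimp simp: Ad_def)
    fix e i assume "(\<Sum>i<n. e i) \<le> d" "i < n"
    moreover have "e i \<le> (\<Sum>i<n. e i)" using \<open>i < n\<close> by (intro member_le_sum) auto
    ultimately show "e i < Suc d" by simp
  qed
  then show ?thesis by (rule finite_subset[OF _ finite_bounded_funs])
qed

lemma polys_le_eq: "polys_le n d = {c. \<forall>e. c e \<noteq> 0 \<longrightarrow> e \<in> Ad n d}"
proof (rule set_eqI, rule iffI)
  fix c :: "(nat \<Rightarrow> nat) \<Rightarrow> 'a" assume "c \<in> polys_le n d"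
  then show "c \<in> {c. \<forall>e. c e \<noteq> 0 \<longrightarrow> e \<in> Ad n d}"
    by (auto simp: polys_le_def mpolys_def Ad_def)
next
  fix c :: "(nat \<Rightarrow> nat) \<Rightarrow> 'a" assume c: "c \<in> {c. \<forall>e. c e \<noteq> 0 \<longrightarrow> e \<in> Ad n d}"
  then have "{e. c e \<noteq> 0} \<subseteq> Ad n d" by auto
  then have "finite {e. c e \<noteq> 0}" using finite_Ad finite_subset by blast
  then show "c \<in> polys_le n d" using c by (auto simp: polys_le_def mpolys_def Ad_def)
qed

lemma Ad_closed:
  "e \<in> Ad n d \<Longrightarrow> i < n \<Longrightarrow> k < e i \<Longrightarrow> e(i:=k) \<in> Ad n d"
  using sum_upd_less[of i n k e] by (auto simp: Ad_def)

lemma dim_aff: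
  fixes K :: "nat \<Rightarrow> 'a::{finite,field} set"
  shows "code_dim (aff_code n K d) = card (boxm n K \<inter> Ad n d)"
  unfolding aff_code_def polys_le_eq
proof (rule dim_code)
  show "finite (Ad n d)" by (rule finite_Ad)
  show "\<And>e. e \<in> Ad n d \<Longrightarrow> \<forall>i\<ge>n. e i = 0" by (auto simp: Ad_def)
  show "\<And>e i k. e \<in> Ad n d \<Longrightarrow> i < n \<Longrightarrow> card (K i) \<le> e i \<Longrightarrow> k < e i \<Longrightarrow> e(i:=k) \<in> Ad n d"
    by (rule Ad_closed)
qed simp

lemma dim_quasi:
  fixes K :: "nat \<Rightarrow> 'a::{finite,field} set"
  assumes "s < n" "\<delta> \<ge> 1"
  shows "code_dim (quasi_code n K \<delta> s d) =
    card (boxm n K \<inter> (Ad n d \<inter> {e. int (e s) < int (card (K s)) - int \<delta> + 1}))"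
proof -
  let ?A = "Ad n d \<inter> {e. int (e s) < int (card (K s)) - int \<delta> + 1}"
  have eq: "quasi_polys n K \<delta> s d = {c. \<forall>e. c e \<noteq> 0 \<longrightarrow> e \<in> ?A}"
    unfolding quasi_polys_def polys_le_eq by auto
  show ?thesis unfolding quasi_code_def eq
  proof (rule dim_code)
    show "finite ?A" using finite_Ad by auto
    show "\<And>e. e \<in> ?A \<Longrightarrow> \<forall>i\<ge>n. e i = 0" by (auto simp: Ad_def)
    fix e i k assume e: "e \<in> ?A" and i: "i < n" "card (K i) \<le> e i" "k < e i"
    have "i \<noteq> s" using e i assms by auto
    then show "e(i:=k) \<in> ?A" using e i Ad_closed by auto
  qed simp
qed



lemma sum_del:
  fixes e :: "nat \<Rightarrow> nat"
  assumes "s \<le> m"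
  shows "(\<Sum>i<Suc m. e i) = e s + (\<Sum>i<m. (if i < s then e i else e (Suc i)))"
  using assms
proof (induction m rule: nat_induct_at_least)
  case base
  have "(\<Sum>i<s. (if i < s then e i else e (Suc i))) = (\<Sum>i<s. e i)" by (intro sum.cong) auto
  then show ?case by simp
next
  case (Suc m)
  then show ?case by simp
qed

definition del :: "nat \<Rightarrow> (nat \<Rightarrow> nat) \<Rightarrow> nat \<Rightarrow> nat" where
  "del s e = (\<lambda>i. if i < s then e i else e (Suc i))"
definition ins :: "nat \<Rightarrow> nat \<Rightarrow> (nat \<Rightarrow> nat) \<Rightarrow> nat \<Rightarrow> nat" where
  "ins s j e = (\<lambda>i. if i < s then e i else if i = s then j else e (i - 1))"

lemma sum_del': "s < n \<Longrightarrow> (\<Sum>i<n. e i) = e s + (\<Sum>i<n-1. del s e i)"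
  using sum_del[of s "n - 1" e] by (simp add: del_def)

lemma del_ins: "del s (ins s j e) = e"
  by (auto simp: del_def ins_def fun_eq_iff)

lemma ins_del: "e s = j \<Longrightarrow> ins s j (del s e) = e"
  by (auto simp: del_def ins_def fun_eq_iff)

lemma ins_s: "ins s j e s = j" by (simp add: ins_def)

lemma fiber_card:
  fixes K :: "nat \<Rightarrow> 'a set"
  assumes s: "s < n" and j: "j < card (K s)" "j \<le> d"
  shows "card {e \<in> boxm n K \<inter> Ad n d. e s = j} = card (boxm (n-1) (drop_set K s) \<inter> Ad (n-1) (d - j))"
proof (rule bij_betw_same_card, rule bij_betw_byWitness[where f' = "ins s j"])
  show "\<forall>a\<in>{e \<in> boxm n K \<inter> Ad n d. e s = j}. ins s j (del s a) = a" using ins_del by blast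
  show "\<forall>a\<in>boxm (n-1) (drop_set K s) \<inter> Ad (n-1) (d - j). del s (ins s j a) = a" using del_ins by blast
  show "del s ` {e \<in> boxm n K \<inter> Ad n d. e s = j} \<subseteq> boxm (n-1) (drop_set K s) \<inter> Ad (n-1) (d - j)"
  proof clarify
    fix e assume e: "e \<in> boxm n K" "e \<in> Ad n d" "j = e s"
    have sm: "(\<Sum>i<n. e i) = e s + (\<Sum>i<n-1. del s e i)" by (rule sum_del'[OF s])
    have "del s e \<in> boxm (n-1) (drop_set K s)"
      using e(1) s unfolding boxm_def del_def drop_set_def by auto
    moreover have "del s e \<in> Ad (n-1) (d - j)"
      using e(2,3) s sm unfolding Ad_def by (auto simp: del_def)
    ultimately show "del s e \<in> boxm (n-1) (drop_set K s) \<inter> Ad (n-1) (d - e s)" using e(3) by simp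
  qed
  show "ins s j ` (boxm (n-1) (drop_set K s) \<inter> Ad (n-1) (d - j)) \<subseteq> {e \<in> boxm n K \<inter> Ad n d. e s = j}"
  proof
    fix x assume "x \<in> ins s j ` (boxm (n-1) (drop_set K s) \<inter> Ad (n-1) (d - j))"
    then obtain e' where e': "e' \<in> boxm (n-1) (drop_set K s)" "e' \<in> Ad (n-1) (d - j)" and x: "x = ins s j e'"
      by blast
    have sm: "(\<Sum>i<n. ins s j e' i) = j + (\<Sum>i<n-1. e' i)"
      using sum_del'[OF s, of "ins s j e'"] by (simp add: del_ins ins_s)
    have b: "ins s j e' \<in> boxm n K"
      unfolding boxm_def
    proof (intro CollectI conjI allI impI)
      fix i assume i: "i < n"
      show "ins s j e' i < card (K i)"
      proof (cases "i < s")
        case True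
        then have "i < n - 1" using s by simp
        then have "e' i < card (drop_set K s i)" using e'(1) by (simp add: boxm_def)
        then show ?thesis using True by (simp add: ins_def drop_set_def)
      next
        case False
        show ?thesis
        proof (cases "i = s")
          case True then show ?thesis using j by (simp add: ins_def)
        next
          case False
          then have "i - 1 < n - 1" "\<not> i - 1 < s" "Suc (i - 1) = i" using \<open>\<not> i < s\<close> i by auto
          then have "e' (i - 1) < card (drop_set K s (i - 1))" using e'(1) by (simp add: boxm_def)
          then show ?thesis using False \<open>\<not> i < s\<close> \<open>\<not> i - 1 < s\<close> \<open>Suc (i - 1) = i\<close>
            by (simp add: ins_def drop_set_def)
        qed
      qed
    next
      fix i assume i: "n \<le> i"
      then have "i - 1 \<ge> n - 1" "\<not> i < s" "i \<noteq> s" using s by auto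
      then show "ins s j e' i = 0" using e'(1) unfolding boxm_def ins_def by auto
    qed
    have "ins s j e' \<in> Ad n d"
      using e'(2) sm b j unfolding Ad_def boxm_def by auto
    then show "x \<in> {e \<in> boxm n K \<inter> Ad n d. e s = j}" using b x by (simp add: ins_s)
  qed
qed

lemma fiber_empty:
  assumes "s < n" "d < j"
  shows "{e \<in> boxm n K \<inter> Ad n d. e s = j} = {}"
proof -
  have "e s \<le> d" if "e \<in> Ad n d" for e
  proof -
    have "e s \<le> (\<Sum>i<n. e i)" using assms by (intro member_le_sum) auto
    then show ?thesis using that by (auto simp: Ad_def)
  qed
  then show ?thesis using assms by (metis (mono_tags, lifting) Int_iff empty_Collect_eq leD)
qed



theorem mainTheorem4:
  fixes K :: "nat \<Rightarrow> 'a::{finite, field} set"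
    and n s \<delta> :: nat and d :: int
  assumes "\<And>i. i < n \<Longrightarrow> K i \<noteq> {}"
    and "s < n"
    and "\<delta> \<ge> 2"
    and "int (card (K s)) - int \<delta> + 1 \<ge> 1"
    and "1 \<le> d"
    and "d \<le> (\<Sum>i\<in>{..<n} - {s}. int (card (K i)) - 1) + int (card (K s)) - int \<delta>"
  shows "(d < int (card (K s)) - int \<delta> + 1 \<longrightarrow>
            code_dim (quasi_code n K \<delta> s (nat d)) = code_dim (aff_code n K (nat d)))
       \<and> (int (card (K s)) - int \<delta> + 1 \<le> d \<longrightarrow>
            int (code_dim (quasi_code n K \<delta> s (nat d))) =
              int (code_dim (aff_code n K (nat d)))
              - (\<Sum>i\<in>{0..int \<delta> - 2}. dim_Xs n K s (d - (int (card (K s)) - int \<delta> + 1) - i)))"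
proof -
  note s = assms(2)
  define ds where "ds = card (K s)"
  define r where "r = ds + 1 - \<delta>"
  define d' where "d' = nat d"
  have hr: "int r = int (card (K s)) - int \<delta> + 1" using assms(4) by (simp add: r_def ds_def)
  have hd: "int d' = d" using assms(5) by (simp add: d'_def)
  define B where "B = boxm n K \<inter> Ad n d'"
  define Q where "Q = {e::nat\<Rightarrow>nat. e s < r}"
  have finB: "finite B" unfolding B_def using finite_boxm by blast
  have dq: "code_dim (quasi_code n K \<delta> s (nat d) :: ((nat \<Rightarrow> 'a) \<Rightarrow> 'a) set) = card (B \<inter> Q)"
  proof -
    have "Ad n d' \<inter> {e. int (e s) < int (card (K s)) - int \<delta> + 1} = Ad n d' \<inter> Q"
      unfolding Q_def hr[symmetric] by auto
    then show ?thesis using dim_quasi[OF s, of \<delta> K d'] assms(3)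
      by (simp add: B_def d'_def Int_assoc)
  qed
  have da: "code_dim (aff_code n K (nat d) :: ((nat \<Rightarrow> 'a) \<Rightarrow> 'a) set) = card B"
    unfolding B_def d'_def by (rule dim_aff)
  have es: "e s \<le> d'" if "e \<in> B" for e
  proof -
    have "e s \<le> (\<Sum>i<n. e i)" using s by (intro member_le_sum) auto
    then show ?thesis using that by (auto simp: B_def Ad_def)
  qed
  have es2: "e s < ds" if "e \<in> B" for e
    using that s by (auto simp: B_def boxm_def ds_def)
  show ?thesis
  proof (intro conjI impI)
    assume "d < int (card (K s)) - int \<delta> + 1"
    then have "B \<inter> Q = B" using es hd hr unfolding Q_def by force
    then show "code_dim (quasi_code n K \<delta> s (nat d)) = code_dim (aff_code n K (nat d))"
      using dq da by simp
  next
    assume "int (card (K s)) - int \<delta> + 1 \<le> d"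
    define F where "F j = {e \<in> B. e s = j}" for j
    have "card B = card (B \<inter> Q) + card (B - Q)"
      using finB by (metis card_Int_Diff)
    moreover have BQ: "B - Q = (\<Union>j\<in>{r..<ds}. F j)"
      using es2 by (auto simp: Q_def F_def not_less)
    have "card (B - Q) = (\<Sum>j\<in>{r..<ds}. card (F j))"
      unfolding BQ using finB by (intro card_UN_disjoint) (auto simp: F_def)
    moreover have "(\<Sum>i\<in>{0..int \<delta> - 2}. dim_Xs n K s (d - (int (card (K s)) - int \<delta> + 1) - i))
        = (\<Sum>j\<in>{r..<ds}. int (card (F j)))"
    proof (rule sum.reindex_bij_witness[of _ "\<lambda>j. int (j - r)" "\<lambda>i. r + nat i"])
      fix i assume i: "i \<in> {0..int \<delta> - 2}"
      show "int (r + nat i - r) = i" using i by auto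
      show "r + nat i \<in> {r..<ds}" using i assms(3,4) by (auto simp: r_def ds_def)
      define J where "J = r + nat i"
      have J: "J < ds" using i assms(3,4) by (auto simp: J_def r_def ds_def)
      show "int (card (F (r + nat i))) = dim_Xs n K s (d - (int (card (K s)) - int \<delta> + 1) - i)"
      proof (cases "J \<le> d'")
        case True
        have e: "d - (int (card (K s)) - int \<delta> + 1) - i = int (d' - J)"
          using True i hd hr by (simp add: J_def)
        have "card (F J) = card (boxm (n-1) (drop_set K s) \<inter> Ad (n-1) (d' - J))"
          unfolding F_def B_def by (rule fiber_card[OF s]) (use J True ds_def in auto)
        also have "\<dots> = code_dim (aff_code (n - 1) (drop_set K s) (d' - J) :: ((nat \<Rightarrow> 'a) \<Rightarrow> 'a) set)"
          by (rule dim_aff[symmetric])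
        finally show ?thesis unfolding e dim_Xs_def J_def by simp
      next
        case False
        have "d' < r + nat i" using False by (simp add: J_def)
        then have "int d' < int r + int (nat i)" by linarith
        moreover have "int (nat i) = i" using i by simp
        ultimately have e: "d - (int (card (K s)) - int \<delta> + 1) - i < 0"
          using hd hr by linarith
        have "F J = {}" unfolding F_def B_def using fiber_empty[OF s, of d' J] False by simp
        then show ?thesis using e unfolding dim_Xs_def J_def by simp
      qed
    next
      fix j assume j: "j \<in> {r..<ds}"
      show "r + nat (int (j - r)) = j" using j by auto
      show "int (j - r) \<in> {0..int \<delta> - 2}" using j assms(3,4) by (auto simp: r_def ds_def)
    qed
    ultimately show "int (code_dim (quasi_code n K \<delta> s (nat d))) =
              int (code_dim (aff_code n K (nat d)))
              - (\<Sum>i\<in>{0..int \<delta> - 2}. dim_Xs n K s (d - (int (card (K s)) - int \<delta> + 1) - i))"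
      using dq da by simp
  qed
qed

end
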